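(* Let $A\in\mathbb{C}$ and expand $$\exp\Big(u\Big(\frac{\mathcal{S}(u\hbar z\partial_z)}{\mathcal{S}(\hbar z\partial_z)}-1\Big)\log(z-A)\Big)=\sum_{k\ge0}\hbar^{2k}c_{2k}(u,z).$$ Then $c_0(u,z)=1$, and for $k\ge1$, writing the Laurent expansion in $z-A$ as $c_{2k}(u,z)=\sum_{l\in\mathbb{Z}}d_{2k,l}(u)(z-A)^{-l}$, for every $l>0$ one has $d_{2k,l}(u)=(u+1)u(u-1)\cdots(u-l+1)\,p_{2k,l}(u)$ for some polynomial $p_{2k,l}(u)\in\mathbb{C}[u]$.
   Context: $\mathcal{S}(w)=(e^{w/2}-e^{-w/2})/w$; the operator $\mathcal{S}(u\hbar z\partial_z)/\mathcal{S}(\hbar z\partial_z)$ is understood as its power series in $\hbar z\partial_z$ (coefficients polynomial in $u$), applied termwise to $\log(z-A)$. *)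

theory Defs
  imports "HOL-Complex_Analysis.Complex_Analysis" "HOL-Computational_Algebra.Computational_Algebra"
begin

definition S_fps :: "complex fps" where
  "S_fps = (fps_exp (1/2) - fps_exp (-1/2)) / fps_X"

text \<open>Power series in w = hbar z d/dz of u (S(u w)/S(w) - 1).\<close>
definition op_fps :: "complex \<Rightarrow> complex fps" where
  "op_fps u = fps_const u * ((S_fps oo (fps_const u * fps_X)) / S_fps - 1)"

definition zdz :: "(complex \<Rightarrow> complex) \<Rightarrow> complex \<Rightarrow> complex" where
  "zdz f = (\<lambda>z. z * deriv f z)"

text \<open>The exponent as a formal power series in hbar, evaluated at (u,z):
  coefficient of hbar^n is op_n(u) (z d/dz)^n log(z - A) (principal branch).\<close>
definition exponent_fps :: "complex \<Rightarrow> complex \<Rightarrow> complex \<Rightarrow> complex fps" where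
  "exponent_fps A u z =
     Abs_fps (\<lambda>n. fps_nth (op_fps u) n * (zdz ^^ n) (\<lambda>w. Ln (w - A)) z)"

definition c_coeff :: "complex \<Rightarrow> nat \<Rightarrow> complex \<Rightarrow> complex \<Rightarrow> complex" where
  "c_coeff A n u z = fps_nth (fps_exp 1 oo exponent_fps A u z) n"

end

theory Submission
  imports Defs
begin


lemma ode_uniq:
  fixes Y W G :: "complex fps"
  assumes "fps_deriv Y = G * Y" "fps_deriv W = G * W" "Y $ 0 = W $ 0"
  shows "Y = W"
proof -
  define D where "D = Y - W"
  have DD: "fps_deriv D = G * D" unfolding D_def using assms(1,2)
    by (simp add: algebra_simps)
  have "D $ n = 0" for n
  proof (induction n rule: less_induct)
    case (less n)
    show ?case
    proof (cases n)
      case 0 then show ?thesis using assms(3) by (simp add: D_def)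
    next
      case (Suc k)
      have "(G * D) $ k = 0" unfolding fps_mult_nth
        by (intro sum.neutral) (use less Suc in auto)
      then have "of_nat (k + 1) * D $ (k + 1) = 0"
        using DD by (metis fps_deriv_nth)
      then show ?thesis using Suc by (simp del: of_nat_Suc)
    qed
  qed
  then show ?thesis unfolding D_def by (simp add: fps_eq_iff)
qed

lemma exp_compose_deriv:
  fixes F :: "complex fps"
  assumes "F $ 0 = 0"
  shows "fps_deriv (fps_exp 1 oo F) = fps_deriv F * (fps_exp 1 oo F)"
  using fps_compose_deriv[OF assms, of "fps_exp 1"] by (simp add: mult.commute)

lemma exp_compose_add:
  fixes F G :: "complex fps"
  assumes "F $ 0 = 0" "G $ 0 = 0"
  shows "fps_exp 1 oo (F + G) = (fps_exp 1 oo F) * (fps_exp 1 oo G)"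
proof (rule ode_uniq[where G = "fps_deriv F + fps_deriv G"])
  show "fps_deriv (fps_exp 1 oo F + G) = (fps_deriv F + fps_deriv G) * (fps_exp 1 oo F + G)"
    using exp_compose_deriv[of "F + G"] assms by simp
  show "fps_deriv ((fps_exp 1 oo F) * (fps_exp 1 oo G)) =
      (fps_deriv F + fps_deriv G) * ((fps_exp 1 oo F) * (fps_exp 1 oo G))"
    using exp_compose_deriv[OF assms(1)] exp_compose_deriv[OF assms(2)]
    by (simp add: fps_deriv_mult algebra_simps)
qed (simp add: fps_compose_nth)

lemma exp_compose_sum:
  fixes F :: "nat \<Rightarrow> complex fps"
  assumes "\<And>j. F j $ 0 = 0"
  shows "fps_exp 1 oo (\<Sum>j<m. F j) = (\<Prod>j<m. fps_exp 1 oo F j)"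
proof (induction m)
  case 0 then show ?case by (simp add: fps_eq_iff fps_compose_nth)
next
  case (Suc m)
  have "fps_exp 1 oo (\<Sum>j<Suc m. F j) = fps_exp 1 oo ((\<Sum>j<m. F j) + F m)" by simp
  also have "\<dots> = (fps_exp 1 oo (\<Sum>j<m. F j)) * (fps_exp 1 oo F m)"
    by (rule exp_compose_add) (simp_all add: assms fps_sum_nth)
  finally show ?case using Suc by simp
qed

definition fmap :: "('a \<Rightarrow> 'b) \<Rightarrow> 'a fps \<Rightarrow> 'b fps" where
  "fmap h F = Abs_fps (\<lambda>n. h (F $ n))"

locale rhom =
  fixes h :: "'a::comm_ring_1 \<Rightarrow> 'b::comm_ring_1"
  assumes hadd: "h (a + b) = h a + h b" and hmult: "h (a * b) = h a * h b"
    and h0: "h 0 = 0" and h1: "h 1 = 1"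
begin
lemma hsum: "h (sum f A) = sum (\<lambda>x. h (f x)) A"
  by (induction A rule: infinite_finite_induct) (simp_all add: h0 hadd)
lemma fmap_mult: "fmap h (F * G) = fmap h F * fmap h G"
  by (simp add: fmap_def fps_eq_iff fps_mult_nth hsum hmult)
lemma fmap_one: "fmap h 1 = 1"
  by (simp add: fmap_def fps_eq_iff h0 h1)
lemma fmap_power: "fmap h (F ^ i) = fmap h F ^ i"
  by (induction i) (simp_all add: fmap_one fmap_mult)
lemma fmap_prod: "fmap h (\<Prod>j<(m::nat). F j) = (\<Prod>j<m. fmap h (F j))"
  by (induction m) (simp_all add: fmap_one fmap_mult)
end

lemma rhom_poly: "rhom (\<lambda>p. poly p x)"
  by unfold_locales simp_all

lemma rhom_ev: "rhom (\<lambda>P. poly (poly P [:u:]) x)"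
  by unfold_locales simp_all



abbreviation "Tf \<equiv> (fps_exp (1/2) - fps_exp (-1/2) :: complex fps)"

lemma S_eq: "S_fps = fps_shift 1 Tf"
  unfolding S_fps_def by simp

lemma S_nth: "fps_nth S_fps n = ((1/2)^(n+1) - (-1/2)^(n+1)) / fact (n+1)"
  unfolding S_eq fps_shift_nth fps_sub_nth fps_exp_nth
  by (simp only: diff_divide_distrib of_nat_fact)

lemma S_nth0: "fps_nth S_fps 0 = 1"
  by (simp add: S_nth)

lemma T_eq: "Tf = fps_X * S_fps"
  by (simp add: fps_eq_iff fps_X_mult_nth S_eq)

lemma S_IS: "S_fps * inverse S_fps = 1"
  using inverse_mult_eq_1[of S_fps] S_nth0 by (simp add: mult.commute)

lemma op_fps_alt: "op_fps u = fps_const u * ((S_fps oo (fps_const u * fps_X)) * inverse S_fps - 1)"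
  unfolding op_fps_def using S_nth0 by (simp add: fps_divide_unit)

lemma op_nth: "fps_nth (op_fps u) n =
   u * ((\<Sum>j=0..n. u^j * fps_nth S_fps j * fps_nth (inverse S_fps) (n-j)) - (if n = 0 then 1 else 0))"
  unfolding op_fps_alt fps_mult_left_const_nth by (simp add: fps_mult_nth)

definition OP :: "nat \<Rightarrow> complex poly" where
  "OP n = [:0,1:] * ((\<Sum>j=0..n. monom (fps_nth S_fps j * fps_nth (inverse S_fps) (n-j)) j)
      - (if n = 0 then 1 else 0))"

lemma poly_OP: "poly (OP n) u = fps_nth (op_fps u) n"
  unfolding OP_def op_nth by (simp add: poly_sum poly_monom mult_ac)

lemma op_nth0: "fps_nth (op_fps u) 0 = 0"
  unfolding op_nth using S_nth0 by simp

lemma X_S_lin: "fps_X * (fps_const c * (S_fps oo (fps_const c * fps_X)))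
   = fps_exp (c/2) - fps_exp (-c/2)"
proof (rule fps_ext)
  fix n
  have p1: "(c/2)^k = c^k * (1/2)^k" for k :: nat
    by (metis power_mult_distrib times_divide_eq_right mult_1_right)
  have p2: "(-(c/2))^k = c^k * (-(1/2))^k" for k :: nat
    by (metis power_mult_distrib mult_minus_right times_divide_eq_right mult_1_right)
  show "fps_nth (fps_X * (fps_const c * (S_fps oo (fps_const c * fps_X)))) n
        = fps_nth (fps_exp (c/2) - fps_exp (-c/2)) n"
  proof (cases n)
    case 0 then show ?thesis by (simp add: fps_X_mult_nth)
  next
    case (Suc k)
    have "fps_nth (fps_X * (fps_const c * (S_fps oo (fps_const c * fps_X)))) n
       = fps_nth (fps_const c * (S_fps oo (fps_const c * fps_X))) k"
      using Suc by (simp only: fps_X_mult_nth) simp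
    also have "\<dots> = c * (c^k * fps_nth S_fps k)"
      by (simp only: fps_mult_left_const_nth fps_nth_compose_linear)
    also have "\<dots> = (c^(k+1) * (1/2)^(k+1) - c^(k+1) * (-1/2)^(k+1)) / fact (k+1)"
      unfolding S_nth by (simp only: power_Suc Suc_eq_plus1[symmetric] right_diff_distrib
         times_divide_eq_right mult.assoc)
    also have "\<dots> = ((c/2)^(k+1) - (-c/2)^(k+1)) / fact (k+1)"
      by (simp only: power_mult_distrib[symmetric]) simp
    also have "\<dots> = fps_nth (fps_exp (c/2) - fps_exp (-c/2)) n"
      using Suc by (simp only: fps_sub_nth fps_exp_nth of_nat_fact diff_divide_distrib Suc_eq_plus1)
    finally show ?thesis .
  qed
qed

definition aj :: "nat \<Rightarrow> nat \<Rightarrow> complex" where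
  "aj m j = (of_nat m - 1 - 2 * of_nat j) / 2"

lemma tele: "(\<Sum>j<m. fps_exp (aj m j)) * Tf = fps_exp (of_nat m/2) - fps_exp (- of_nat m/2)"
proof -
  define f where "f j = fps_exp ((of_nat m - 2 * of_nat j) / 2 :: complex)" for j
  have "(\<Sum>j<m. fps_exp (aj m j)) * Tf = (\<Sum>j<m. fps_exp (aj m j) * Tf)"
    by (simp add: sum_distrib_right)
  also have "\<dots> = (\<Sum>j<m. f j - f (Suc j))"
  proof (rule sum.cong)
    fix j assume "j \<in> {..<m}"
    have "fps_exp (aj m j) * Tf = fps_exp (aj m j) * fps_exp (1/2) - fps_exp (aj m j) * fps_exp (-1/2)"
      by (simp only: right_diff_distrib)
    also have "\<dots> = fps_exp (aj m j + 1/2) - fps_exp (aj m j + (-1/2))"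
      by (simp only: fps_exp_add_mult)
    also have "aj m j + 1/2 = (of_nat m - 2 * of_nat j) / 2"
      by (simp add: aj_def field_simps)
    also have "aj m j + (-1/2) = (of_nat m - 2 * of_nat (Suc j)) / 2"
      by (simp add: aj_def field_simps)
    finally show "fps_exp (aj m j) * Tf = f j - f (Suc j)" by (simp add: f_def)
  qed simp
  also have "\<dots> = f 0 - f m" by (rule sum_lessThan_telescope')
  also have "\<dots> = fps_exp (of_nat m/2) - fps_exp (- of_nat m/2)"
    by (simp add: f_def field_simps)
  finally show ?thesis .
qed

lemma op_nat: "op_fps (of_nat m) = (\<Sum>j<m. fps_exp (aj m j)) - fps_const (of_nat m)"
proof -
  define F where "F = (\<Sum>j<m. fps_exp (aj m j))"
  define c :: complex where "c = of_nat m"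
  have "fps_X * (F * S_fps) = F * Tf" unfolding T_eq by (simp add: mult_ac)
  also have "\<dots> = fps_X * (fps_const c * (S_fps oo (fps_const c * fps_X)))"
    unfolding F_def tele X_S_lin c_def by simp
  finally have "F * S_fps = fps_const c * (S_fps oo (fps_const c * fps_X))"
    by simp
  then have "op_fps c = fps_const c * ((S_fps oo (fps_const c * fps_X)) * inverse S_fps) - fps_const c"
    unfolding op_fps_alt by (simp add: algebra_simps)
  also have "\<dots> = F * S_fps * inverse S_fps - fps_const c"
    using \<open>F * S_fps = _\<close> by (simp add: mult.assoc)
  also have "\<dots> = F - fps_const c" using S_IS by (simp add: mult.assoc)
  finally show ?thesis unfolding F_def c_def .
qed

lemma op_nat_nth: "fps_nth (op_fps (of_nat m)) n = (if n = 0 then 0 else (\<Sum>j<m. aj m j ^ n / fact n))"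
  unfolding op_nat by (simp add: fps_sum_nth)

lemma S_even: "S_fps oo (fps_const (-1) * fps_X) = S_fps"
proof (rule fps_ext)
  fix n
  show "fps_nth (S_fps oo (fps_const (-1) * fps_X)) n = fps_nth S_fps n"
  proof (cases "even n")
    case False
    then have "even (n+1)" by simp
    then have "(-1/2 :: complex)^(n+1) = (1/2)^(n+1)"
      by (metis minus_divide_left power_minus_even)
    then have "fps_nth S_fps n = 0" unfolding S_nth by (simp only: diff_self) simp
    then show ?thesis by simp
  qed simp
qed

lemma op_minus1: "op_fps (-1) = 0"
  unfolding op_fps_alt S_even[unfolded fps_const_neg] using S_IS
  by simp



definition S0 :: "complex \<Rightarrow> complex set" where
  "S0 A = (\<lambda>w. w - A) -` (- \<real>\<^sub>\<le>\<^sub>0)"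

definition Lf :: "complex \<Rightarrow> complex \<Rightarrow> complex" where
  "Lf A = (\<lambda>w. Ln (w - A))"

lemma S0_iff: "w \<in> S0 A \<longleftrightarrow> w - A \<notin> \<real>\<^sub>\<le>\<^sub>0"
  by (simp add: S0_def)

lemma open_S0: "open (S0 A)"
  unfolding S0_def
  by (rule continuous_open_vimage) (auto intro!: continuous_intros simp: open_Compl)

lemma Lf_hol: "Lf A holomorphic_on S0 A"
  unfolding Lf_def by (intro holomorphic_on_Ln' holomorphic_intros) (auto simp: S0_iff)

lemma zdz_hol: "open S \<Longrightarrow> g holomorphic_on S \<Longrightarrow> zdz g holomorphic_on S"
  unfolding zdz_def by (intro holomorphic_intros holomorphic_deriv)

lemma chain_aux:
  assumes "open S" "open U" "\<And>h. h \<in> U \<Longrightarrow> exp (a*h) * z \<in> S"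
  shows "g holomorphic_on S \<Longrightarrow> h \<in> U \<Longrightarrow>
    (deriv^^n) (\<lambda>h. c * g (exp (a*h) * z)) h = c * a^n * (zdz^^n) g (exp (a*h) * z)"
proof (induction n arbitrary: c g h)
  case 0 then show ?case by simp
next
  case (Suc n)
  have der: "deriv (\<lambda>h. c * g (exp (a*h) * z)) h' = (c*a) * zdz g (exp (a*h') * z)"
    if "h' \<in> U" for h'
  proof -
    have w: "exp (a*h') * z \<in> S" using assms(3) that .
    have "((\<lambda>h. c * g (exp (a*h) * z)) has_field_derivative
            c * (deriv g (exp (a*h')*z) * (a * exp (a*h') * z))) (at h')"
      apply (intro DERIV_cmult DERIV_chain2[where f=g])
      using holomorphic_derivI[OF Suc.prems(1) assms(1) w] apply simp
      by (auto intro!: derivative_eq_intros)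
    then show ?thesis by (simp add: DERIV_imp_deriv zdz_def mult_ac)
  qed
  have ev: "eventually (\<lambda>h'. deriv (\<lambda>h. c * g (exp (a*h) * z)) h'
               = (\<lambda>h'. (c*a) * zdz g (exp (a*h') * z)) h') (nhds h)"
    using eventually_nhds_in_open[OF assms(2) Suc.prems(2)] by eventually_elim (simp add: der)
  have "(deriv^^Suc n) (\<lambda>h. c * g (exp (a*h) * z)) h
      = (deriv^^n) (deriv (\<lambda>h. c * g (exp (a*h) * z))) h"
    by (simp add: funpow_Suc_right del: funpow.simps)
  also have "\<dots> = (deriv^^n) (\<lambda>h'. (c*a) * zdz g (exp (a*h') * z)) h"
    by (rule higher_deriv_cong_ev[OF ev refl])
  also have "\<dots> = (c*a) * a^n * (zdz^^n) (zdz g) (exp (a*h) * z)"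
    by (rule Suc.IH) (use zdz_hol Suc.prems assms in auto)
  also have "\<dots> = c * a^Suc n * (zdz^^Suc n) g (exp (a*h) * z)"
    by (simp add: funpow_Suc_right mult_ac del: funpow.simps)
  finally show ?case .
qed

lemma has_fps_unique:
  fixes f g :: "complex \<Rightarrow> complex"
  assumes "f has_fps_expansion F" "g has_fps_expansion G" "eventually (\<lambda>x. f x = g x) (nhds 0)"
  shows "F = G"
proof (rule fps_ext)
  fix n
  show "fps_nth F n = fps_nth G n"
    using fps_nth_fps_expansion[OF assms(1)] fps_nth_fps_expansion[OF assms(2)]
      higher_deriv_cong_ev[OF assms(3) refl] by simp
qed

lemma per_a:
  fixes z A a :: complex
  assumes z: "z \<in> S0 A"
  defines "FE \<equiv> fps_expansion (\<lambda>h. Lf A (exp (a*h) * z)) 0"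
  shows "fps_nth FE n = a^n * (zdz^^n) (Lf A) z / fact n"
    and "fps_deriv FE * (fps_const z * fps_exp a - fps_const A) = fps_const (a*z) * fps_exp a"
proof -
  define U where "U = (\<lambda>h. exp (a*h) * z) -` S0 A"
  have U: "open U" unfolding U_def
    by (rule continuous_open_vimage[OF open_S0]) (auto intro!: continuous_intros)
  have U0: "0 \<in> U" using z by (simp add: U_def)
  have inU: "\<And>h. h \<in> U \<Longrightarrow> exp (a*h) * z \<in> S0 A" by (simp add: U_def)
  have hol: "(\<lambda>h. Lf A (exp (a*h) * z)) holomorphic_on U"
    unfolding Lf_def by (intro holomorphic_on_Ln' holomorphic_intros) (auto simp: U_def S0_iff)
  have fe: "(\<lambda>h. Lf A (exp (a*h) * z)) has_fps_expansion FE"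
    unfolding FE_def by (rule has_fps_expansion_fps_expansion[OF U U0 hol])
  have ch: "(deriv^^n) (\<lambda>h. Lf A (exp (a*h) * z)) h = a^n * (zdz^^n) (Lf A) (exp (a*h) * z)"
    if "h \<in> U" for n h
    using chain_aux[OF open_S0 U inU Lf_hol that, of n 1] by simp
  show "fps_nth FE n = a^n * (zdz^^n) (Lf A) z / fact n"
    unfolding FE_def fps_expansion_def using ch[OF U0, of n] by simp
  have e1: "(\<lambda>h. deriv (\<lambda>h. Lf A (exp (a*h) * z)) h * (z * exp (a*h) - A)) has_fps_expansion
        fps_deriv FE * (fps_const z * fps_exp a - fps_const A)"
    by (intro has_fps_expansion_mult has_fps_expansion_deriv fe has_fps_expansion_diff
          has_fps_expansion_cmult_left has_fps_expansion_exp has_fps_expansion_const)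
  have e2: "(\<lambda>h. (a*z) * exp (a*h)) has_fps_expansion fps_const (a*z) * fps_exp a"
    by (intro has_fps_expansion_cmult_left has_fps_expansion_exp)
  have eq: "deriv (\<lambda>h. Lf A (exp (a*h) * z)) h * (z * exp (a*h) - A) = (a*z) * exp (a*h)"
    if "h \<in> U" for h
  proof -
    define w where "w = exp (a*h) * z"
    have w: "w - A \<notin> \<real>\<^sub>\<le>\<^sub>0" using inU[OF that] by (simp add: w_def S0_iff)
    then have wA: "w - A \<noteq> 0" by auto
    have "(Lf A has_field_derivative inverse (w - A)) (at w)"
      unfolding Lf_def using w by (auto intro!: derivative_eq_intros)
    then have dL: "deriv (Lf A) w = inverse (w - A)" by (rule DERIV_imp_deriv)
    have "deriv (\<lambda>h. Lf A (exp (a*h) * z)) h = a * zdz (Lf A) w"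
      using ch[OF that, of 1] by (simp add: w_def)
    also have "\<dots> = a * w / (w - A)" by (simp add: zdz_def dL field_simps)
    finally show ?thesis using wA by (simp add: w_def field_simps)
  qed
  have ev: "eventually (\<lambda>h. deriv (\<lambda>h. Lf A (exp (a*h) * z)) h * (z * exp (a*h) - A)
              = (a*z) * exp (a*h)) (nhds 0)"
    using eventually_nhds_in_open[OF U U0] by eventually_elim (simp add: eq)
  show "fps_deriv FE * (fps_const z * fps_exp a - fps_const A) = fps_const (a*z) * fps_exp a"
    by (rule has_fps_unique[OF e1 e2 ev])
qed

definition Fa :: "complex \<Rightarrow> complex \<Rightarrow> complex \<Rightarrow> complex fps" where
  "Fa A z a = Abs_fps (\<lambda>n. if n = 0 then 0 else a^n * (zdz^^n) (Lf A) z / fact n)"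

lemma exp_Fa:
  assumes z: "z \<in> S0 A"
  shows "fps_exp 1 oo Fa A z a = fps_const (1/(z-A)) * (fps_const z * fps_exp a - fps_const A)"
proof -
  define FE where "FE = fps_expansion (\<lambda>h. Lf A (exp (a*h) * z)) 0"
  note pa = per_a[OF z, of a, folded FE_def]
  have FaE: "Fa A z a = FE - fps_const (Lf A z)"
    by (simp add: fps_eq_iff Fa_def pa(1))
  have d: "fps_deriv (Fa A z a) = fps_deriv FE" by (simp add: FaE)
  have zA: "z - A \<noteq> 0" using z by (auto simp: S0_iff)
  show ?thesis
  proof (rule ode_uniq[where G = "fps_deriv (Fa A z a)"])
    show "fps_deriv (fps_exp 1 oo Fa A z a) = fps_deriv (Fa A z a) * (fps_exp 1 oo Fa A z a)"
      by (rule exp_compose_deriv) (simp add: Fa_def)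
    have "fps_deriv (Fa A z a) * (fps_const (1/(z-A)) * (fps_const z * fps_exp a - fps_const A))
        = fps_const (1/(z-A)) * (fps_deriv FE * (fps_const z * fps_exp a - fps_const A))"
      by (simp add: d mult_ac)
    also have "\<dots> = fps_const (1/(z-A)) * (fps_const (a*z) * fps_exp a)" by (simp only: pa(2))
    also have "\<dots> = fps_deriv (fps_const (1/(z-A)) * (fps_const z * fps_exp a - fps_const A))"
      by (simp add: fps_const_mult[symmetric] mult_ac del: fps_const_mult)
    finally show "fps_deriv (fps_const (1/(z-A)) * (fps_const z * fps_exp a - fps_const A))
        = fps_deriv (Fa A z a) * (fps_const (1/(z-A)) * (fps_const z * fps_exp a - fps_const A))" ..
    show "fps_nth (fps_exp 1 oo Fa A z a) 0 =
          fps_nth (fps_const (1/(z-A)) * (fps_const z * fps_exp a - fps_const A)) 0"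
    proof -
      have "1/(z-A) * (z - A) = 1" using zA by simp
      then show ?thesis by simp
    qed
  qed
qed



lemma Lf_eq: "(\<lambda>w. Ln (w - A)) = Lf A" by (simp add: Lf_def)

lemma exponent_nat:
  assumes "z \<in> S0 A"
  shows "exponent_fps A (of_nat m) z = (\<Sum>j<m. Fa A z (aj m j))"
proof (rule fps_ext)
  fix n
  show "fps_nth (exponent_fps A (of_nat m) z) n = fps_nth (\<Sum>j<m. Fa A z (aj m j)) n"
    by (simp add: exponent_fps_def Lf_eq op_nat_nth fps_sum_nth Fa_def sum_distrib_right)
qed

definition KK :: "complex \<Rightarrow> complex \<Rightarrow> complex poly fps" where
  "KK A a = Abs_fps (\<lambda>n. if n = 0 then [:0,1:] else smult (a ^ n / fact n) [:A,1:])"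

lemma KK_eval: "fmap (\<lambda>p. poly p (z - A)) (KK A a) = fps_const z * fps_exp a - fps_const A"
proof (rule fps_ext)
  fix n
  show "fps_nth (fmap (\<lambda>p. poly p (z - A)) (KK A a)) n = fps_nth (fps_const z * fps_exp a - fps_const A) n"
  proof (cases "n = 0")
    case True then show ?thesis by (simp add: fmap_def KK_def)
  next
    case False
    have g: "poly (smult c [:A, 1:]) x = c * (A + x)" for c x :: complex by (simp add: algebra_simps)
    have "poly (smult (a ^ n / fact n) [:A, 1:]) (z - A) = z * (a ^ n / fact n)"
      unfolding g by simp
    then show ?thesis using False by (simp add: fmap_def KK_def)
  qed
qed

lemma KK_deg: "degree (fps_nth (KK A a) n) \<le> 1"
  by (simp add: KK_def)

lemma prod_deg:
  fixes Q :: "nat \<Rightarrow> complex poly fps"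
  assumes "\<And>j n. degree (fps_nth (Q j) n) \<le> 1"
  shows "degree (fps_nth (\<Prod>j<m. Q j) n) \<le> m"
proof (induction m arbitrary: n)
  case 0 then show ?case by simp
next
  case (Suc m)
  have "degree (fps_nth ((\<Prod>j<m. Q j) * Q m) n) \<le> Suc m"
    unfolding fps_mult_nth
  proof (intro degree_sum_le)
    fix i assume "i \<in> {0..n}"
    have "degree (fps_nth (\<Prod>j<m. Q j) i * fps_nth (Q m) (n - i))
          \<le> degree (fps_nth (\<Prod>j<m. Q j) i) + degree (fps_nth (Q m) (n - i))"
      by (rule degree_mult_le)
    also have "\<dots> \<le> m + 1" using Suc.IH[of i] assms[of m "n - i"] by linarith
    finally show "degree (fps_nth (\<Prod>j<m. Q j) i * fps_nth (Q m) (n - i)) \<le> Suc m" by simp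
  qed simp
  then show ?case by simp
qed

lemma c_nat:
  assumes z: "z \<in> S0 A"
  shows "c_coeff A n (of_nat m) z =
     (1/(z-A))^m * poly (fps_nth (\<Prod>j<m. KK A (aj m j)) n) (z - A)"
proof -
  interpret rhom "\<lambda>p. poly p (z - A)" by (rule rhom_poly)
  have "c_coeff A n (of_nat m) z = fps_nth (\<Prod>j<m. fps_exp 1 oo Fa A z (aj m j)) n"
    unfolding c_coeff_def exponent_nat[OF z]
    by (subst exp_compose_sum) (simp_all add: Fa_def)
  also have "(\<Prod>j<m. fps_exp 1 oo Fa A z (aj m j))
      = (\<Prod>j<m. fps_const (1/(z-A)) * fmap (\<lambda>p. poly p (z - A)) (KK A (aj m j)))"
    by (simp add: exp_Fa[OF z] KK_eval)
  also have "\<dots> = fps_const ((1/(z-A))^m) * fmap (\<lambda>p. poly p (z - A)) (\<Prod>j<m. KK A (aj m j))"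
    by (simp add: prod.distrib fmap_prod fps_const_power)
  finally show ?thesis by (simp add: fmap_def)
qed

lemma c_nat_deg: "degree (fps_nth (\<Prod>j<m. KK A (aj m j)) n) \<le> m"
  by (rule prod_deg) (rule KK_deg)

lemma c_minus1:
  assumes "n \<ge> 1"
  shows "c_coeff A n (-1) z = 0"
proof -
  have "exponent_fps A (-1) z = 0"
    by (simp add: fps_eq_iff exponent_fps_def op_minus1)
  then show ?thesis using assms by (simp add: c_coeff_def)
qed

fun PP :: "complex \<Rightarrow> nat \<Rightarrow> complex poly" where
  "PP A 0 = [:1, A:]"
| "PP A (Suc n) = - ([:0, 1, A:] * pderiv (PP A n))"

lemma zdz_poly:
  assumes "w - A \<noteq> 0"
  shows "zdz (\<lambda>w. poly p (1/(w - A))) w = poly (- ([:0, 1, A:] * pderiv p)) (1/(w - A))"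
proof -
  have "((\<lambda>w. poly p (1/(w - A))) has_field_derivative
          poly (pderiv p) (1/(w-A)) * (- 1 / (w - A)^2)) (at w)"
    by (rule DERIV_chain2[OF poly_DERIV]) (use assms in \<open>auto intro!: derivative_eq_intros simp: power2_eq_square\<close>)
  then have dd: "deriv (\<lambda>w. poly p (1/(w - A))) w = poly (pderiv p) (1/(w-A)) * (- 1 / (w - A)^2)"
    by (rule DERIV_imp_deriv)
  have M: "w * (- 1 / (w - A)^2) = - (1/(w-A) + A * (1/(w-A))^2)"
  proof -
    have gen: "\<And>d. d \<noteq> 0 \<Longrightarrow> (d + A) * (-1/d^2) = -(1/d + A*(1/d)^2)"
      by (simp add: divide_simps power2_eq_square)
    from gen[OF assms] show ?thesis by simp
  qed
  have "zdz (\<lambda>w. poly p (1/(w - A))) w = poly (pderiv p) (1/(w-A)) * (w * (- 1 / (w - A)^2))"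
    by (simp only: zdz_def dd mult.left_commute)
  also have "\<dots> = poly (pderiv p) (1/(w-A)) * (- (1/(w-A) + A * (1/(w-A))^2))"
    by (simp only: M)
  also have "\<dots> = poly (- ([:0, 1, A:] * pderiv p)) (1/(w - A))"
    by (simp add: algebra_simps power2_eq_square)
  finally show ?thesis .
qed

lemma zdz_cong:
  assumes "open S" "\<And>w. w \<in> S \<Longrightarrow> f w = g w" "w \<in> S"
  shows "zdz f w = zdz g w"
proof -
  have "eventually (\<lambda>x. f x = g x) (nhds w)"
    using eventually_nhds_in_open[OF assms(1,3)] by eventually_elim (use assms(2) in auto)
  then have "deriv f w = deriv g w" by (rule deriv_cong_ev) simp
  then show ?thesis by (simp add: zdz_def)
qed

lemma zdz_Lf:
  "w \<in> S0 A \<Longrightarrow> (zdz^^(Suc n)) (Lf A) w = poly (PP A n) (1/(w - A))"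
proof (induction n arbitrary: w)
  case 0
  then have w: "w - A \<notin> \<real>\<^sub>\<le>\<^sub>0" by (simp add: S0_iff)
  then have wA: "w - A \<noteq> 0" by auto
  have "(Lf A has_field_derivative inverse (w - A)) (at w)"
    unfolding Lf_def using w by (auto intro!: derivative_eq_intros)
  then have dL: "deriv (Lf A) w = inverse (w - A)" by (rule DERIV_imp_deriv)
  have "w * inverse (w - A) = ((w - A) + A) * inverse (w - A)" by simp
  also have "\<dots> = (w - A) * inverse (w - A) + A * inverse (w-A)" by (rule distrib_right)
  also have "\<dots> = 1 + A * inverse (w-A)" using wA by simp
  finally show ?case by (simp add: zdz_def dL divide_inverse)
next
  case (Suc n)
  have wA: "w - A \<noteq> 0" using Suc.prems by (auto simp: S0_iff)
  have "(zdz^^(Suc (Suc n))) (Lf A) w = zdz ((zdz^^(Suc n)) (Lf A)) w" by simp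
  also have "\<dots> = zdz (\<lambda>w. poly (PP A n) (1/(w - A))) w"
    by (rule zdz_cong[OF open_S0 Suc.IH Suc.prems])
  also have "\<dots> = poly (PP A (Suc n)) (1/(w - A))" using zdz_poly[OF wA] by simp
  finally show ?case .
qed

definition EP :: "complex \<Rightarrow> complex poly poly fps" where
  "EP A = Abs_fps (\<lambda>n. if n = 0 then 0 else map_poly (\<lambda>c. [:c:]) (OP n) * [:PP A (n-1):])"

lemma poly_map_const: "poly (map_poly (\<lambda>c. [:c:]) p) [:u:] = [:poly p u:]"
  by (induction p) (simp_all add: map_poly_pCons mult.commute)

definition CC :: "complex \<Rightarrow> nat \<Rightarrow> complex poly poly" where
  "CC A n = (\<Sum>i=0..n. [:[:1 / fact i:]:] * fps_nth (EP A ^ i) n)"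

lemma c_CC:
  assumes z: "z \<in> S0 A"
  shows "c_coeff A n u z = poly (poly (CC A n) [:u:]) (1/(z - A))"
proof -
  interpret rhom "\<lambda>P. poly (poly P [:u:]) (1/(z - A))" by (rule rhom_ev)
  have E: "exponent_fps A u z = fmap (\<lambda>P. poly (poly P [:u:]) (1/(z - A))) (EP A)"
  proof (rule fps_ext)
    fix n
    show "fps_nth (exponent_fps A u z) n =
          fps_nth (fmap (\<lambda>P. poly (poly P [:u:]) (1/(z - A))) (EP A)) n"
    proof (cases n)
      case 0 then show ?thesis by (simp add: exponent_fps_def fmap_def EP_def op_nth0)
    next
      case (Suc k)
      then show ?thesis
        using zdz_Lf[OF z, of k]
        by (simp add: exponent_fps_def fmap_def EP_def poly_map_const poly_OP Lf_eq)
    qed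
  qed
  have "c_coeff A n u z = (\<Sum>i=0..n. 1 / fact i * fps_nth (exponent_fps A u z ^ i) n)"
    by (simp add: c_coeff_def fps_compose_nth)
  also have "\<dots> = (\<Sum>i=0..n. 1 / fact i * poly (poly (fps_nth (EP A ^ i) n) [:u:]) (1/(z - A)))"
    unfolding E fmap_power[symmetric] by (simp add: fmap_def)
  also have "\<dots> = poly (poly (CC A n) [:u:]) (1/(z - A))"
    by (simp add: CC_def poly_sum)
  finally show ?thesis .
qed



lemma poly_sum_bound:
  fixes Q :: "'a::comm_semiring_1 poly"
  assumes "degree Q \<le> m"
  shows "poly Q y = (\<Sum>i\<le>m. coeff Q i * y^i)"
proof -
  have "poly Q y = (\<Sum>i\<le>degree Q. coeff Q i * y^i)" by (rule poly_altdef)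
  also have "\<dots> = (\<Sum>i\<le>m. coeff Q i * y^i)"
    by (rule sum.mono_neutral_left) (use assms in \<open>auto simp: coeff_eq_0\<close>)
  finally show ?thesis .
qed

lemma compare:
  fixes P Q :: "complex poly"
  assumes dQ: "degree Q \<le> m"
    and eq: "\<And>t::real. t > 0 \<Longrightarrow> poly P (1 / of_real t) = (1 / of_real t)^m * poly Q (of_real t)"
    and l: "l > m"
  shows "coeff P l = 0"
proof -
  define R where "R = (\<Sum>i\<le>m. monom (coeff Q i) (m - i))"
  have R: "poly R x = x^m * poly Q (1/x)" if "x \<noteq> 0" for x :: complex
  proof -
    have "poly R x = (\<Sum>i\<le>m. coeff Q i * x^(m - i))"
      by (simp add: R_def poly_sum poly_monom)
    also have "\<dots> = (\<Sum>i\<le>m. x^m * (coeff Q i * (1/x)^i))"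
      by (rule sum.cong) (use that in \<open>auto simp: power_diff power_one_over field_simps\<close>)
    also have "\<dots> = x^m * poly Q (1/x)"
      by (simp add: poly_sum_bound[OF dQ] sum_distrib_left)
    finally show ?thesis .
  qed
  have roots: "poly (P - R) (of_real s) = 0" if "s > 0" for s :: real
  proof -
    have "poly P (of_real s) = poly P (1 / of_real (1/s))" by simp
    also have "\<dots> = (1 / of_real (1/s))^m * poly Q (of_real (1/s))"
      by (rule eq) (use that in simp)
    also have "\<dots> = poly R (of_real s)" using R[of "of_real s"] that by simp
    finally show ?thesis by simp
  qed
  have "P - R = 0"
  proof (rule ccontr)
    assume "P - R \<noteq> 0"
    then have fin: "finite {x. poly (P - R) x = 0}" by (rule poly_roots_finite)
    have "of_real ` {0<..} \<subseteq> {x. poly (P - R) x = (0::complex)}" using roots by auto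
    with fin have "finite (of_real ` {0<..} :: complex set)" by (rule finite_subset[rotated])
    then have "finite {0::real<..}"
      by (rule finite_imageD) (simp add: inj_on_def)
    then show False using infinite_Ioi[of "0::real"] by simp
  qed
  then have "P = R" by simp
  moreover have "(\<Sum>i\<le>m. if m - i = l then coeff Q i else 0) = 0"
    by (rule sum.neutral) (use l in auto)
  ultimately show ?thesis by (simp add: R_def coeff_sum coeff_monom)
qed

lemma roots_dvd:
  fixes p :: "complex poly"
  assumes "finite R" "\<forall>r\<in>R. poly p r = 0"
  shows "\<exists>q. p = (\<Prod>r\<in>R. [:-r, 1:]) * q"
  using assms
proof (induction R arbitrary: p rule: finite_induct)
  case empty then show ?case by simp
next
  case (insert r R)
  have "[:-r, 1:] dvd p" using insert.prems by (simp add: poly_eq_0_iff_dvd[symmetric])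
  then obtain q1 where q1: "p = [:-r, 1:] * q1" by (elim dvdE)
  have "\<forall>r'\<in>R. poly q1 r' = 0"
  proof
    fix r' assume "r' \<in> R"
    then have "r' \<noteq> r" "poly p r' = 0" using insert by auto
    then show "poly q1 r' = 0" using q1 by simp
  qed
  then obtain q where "q1 = (\<Prod>r\<in>R. [:-r, 1:]) * q" using insert.IH by blast
  then show ?case using q1 insert.hyps by (auto simp: mult_ac)
qed

definition DL :: "complex poly poly \<Rightarrow> nat \<Rightarrow> complex poly" where
  "DL P l = (\<Sum>i\<le>degree P. monom (coeff (coeff P i) l) i)"

definition NN :: "complex poly poly \<Rightarrow> nat" where
  "NN P = (\<Sum>i\<le>degree P. degree (coeff P i))"

lemma coeff_ev: "coeff (poly P [:u:]) l = poly (DL P l) u"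
  by (simp add: poly_altdef[of P] DL_def coeff_sum poly_sum poly_monom poly_const_pow mult.commute)

lemma DL_zero:
  assumes "l > NN P"
  shows "DL P l = 0"
proof -
  have "coeff (coeff P i) l = 0" if "i \<le> degree P" for i
  proof -
    have "degree (coeff P i) \<le> NN P"
      unfolding NN_def by (rule member_le_sum) (use that in auto)
    then show ?thesis using assms by (intro coeff_eq_0) simp
  qed
  then show ?thesis by (simp add: DL_def)
qed

lemma deg_ev: "degree (poly P [:u:]) \<le> NN P"
  by (rule degree_le) (simp add: coeff_ev DL_zero)



lemma S0_shift: "(t::real) > 0 \<Longrightarrow> A + of_real t \<in> S0 A"
  by (simp add: S0_iff)

theorem lemma4p2:
  fixes A :: complex
  shows "(\<forall>u z. z - A \<notin> \<real>\<^sub>\<le>\<^sub>0 \<longrightarrow> c_coeff A 0 u z = 1) \<and>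
    (\<forall>k::nat. k \<ge> 1 \<longrightarrow>
      (\<exists>(N::nat) (d :: int \<Rightarrow> complex \<Rightarrow> complex).
        (\<forall>u z. z - A \<notin> \<real>\<^sub>\<le>\<^sub>0 \<longrightarrow>
           c_coeff A (2 * k) u z = (\<Sum>l\<in>{- int N..int N}. d l u * (z - A) powi (- l))) \<and>
        (\<forall>l u. \<bar>l\<bar> > int N \<longrightarrow> d l u = 0) \<and>
        (\<forall>l>0. \<exists>p :: complex poly. \<forall>u.
           d l u = (\<Prod>i=0..nat l. u + 1 - of_nat i) * poly p u)))"
proof -
  have part1: "\<forall>u z. z - A \<notin> \<real>\<^sub>\<le>\<^sub>0 \<longrightarrow> c_coeff A 0 u z = 1"
    by (simp add: c_coeff_def)
  have part2: "\<exists>(N::nat) (d :: int \<Rightarrow> complex \<Rightarrow> complex).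
        (\<forall>u z. z - A \<notin> \<real>\<^sub>\<le>\<^sub>0 \<longrightarrow>
           c_coeff A (2 * k) u z = (\<Sum>l\<in>{- int N..int N}. d l u * (z - A) powi (- l))) \<and>
        (\<forall>l u. \<bar>l\<bar> > int N \<longrightarrow> d l u = 0) \<and>
        (\<forall>l>0. \<exists>p :: complex poly. \<forall>u.
           d l u = (\<Prod>i=0..nat l. u + 1 - of_nat i) * poly p u)"
    if k: "k \<ge> 1" for k :: nat
  proof -
    define n where "n = 2 * k"
    have n1: "n \<ge> 1" using k by (simp add: n_def)
    define P where "P = CC A n"
    define N where "N = NN P"
    define d :: "int \<Rightarrow> complex \<Rightarrow> complex" where
      "d l u = (if 0 \<le> l then poly (DL P (nat l)) u else 0)" for l u
    have i: "c_coeff A (2 * k) u z = (\<Sum>l\<in>{- int N..int N}. d l u * (z - A) powi (- l))"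
      if z: "z - A \<notin> \<real>\<^sub>\<le>\<^sub>0" for u z
    proof -
      have zS: "z \<in> S0 A" using z by (simp add: S0_iff)
      have "c_coeff A (2 * k) u z = poly (poly P [:u:]) (1/(z - A))"
        using c_CC[OF zS] by (simp add: P_def n_def)
      also have "\<dots> = (\<Sum>i\<le>N. coeff (poly P [:u:]) i * (1/(z - A))^i)"
        by (rule poly_sum_bound) (simp add: N_def deg_ev)
      also have "\<dots> = (\<Sum>i\<le>N. d (int i) u * (z - A) powi (- int i))"
        by (rule sum.cong) (simp_all add: d_def coeff_ev power_int_minus power_one_over inverse_eq_divide)
      also have "\<dots> = (\<Sum>l\<in>int ` {..N}. d l u * (z - A) powi (- l))"
        by (subst sum.reindex) (auto simp: inj_on_def)
      also have "int ` {..N} = {0..int N}"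
        by (simp add: atMost_atLeast0 image_int_atLeastAtMost)
      also have "(\<Sum>l\<in>{0..int N}. d l u * (z - A) powi (- l)) =
                 (\<Sum>l\<in>{- int N..int N}. d l u * (z - A) powi (- l))"
        by (rule sum.mono_neutral_left) (auto simp: d_def)
      finally show ?thesis .
    qed
    have ii: "d l u = 0" if "\<bar>l\<bar> > int N" for l u
    proof (cases "0 \<le> l")
      case True
      then have "nat l > NN P" using that by (simp add: N_def)
      then show ?thesis using True by (simp add: d_def DL_zero)
    qed (simp add: d_def)
    have iii: "\<exists>p :: complex poly. \<forall>u. d l u = (\<Prod>i=0..nat l. u + 1 - of_nat i) * poly p u"
      if l: "l > 0" for l :: int
    proof -
      define L where "L = nat l"
      have L1: "L \<ge> 1" using l by (simp add: L_def)
      define Rts where "Rts = (\<lambda>i. of_nat i - 1 :: complex) ` {0..L}"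
      have van: "\<forall>r\<in>Rts. poly (DL P L) r = 0"
      proof
        fix r assume "r \<in> Rts"
        then obtain i where i: "i \<in> {0..L}" "r = of_nat i - 1" by (auto simp: Rts_def)
        show "poly (DL P L) r = 0"
        proof (cases "i = 0")
          case True
          then have r: "r = -1" using i by simp
          have "coeff (poly P [:-1:]) L = 0"
          proof (rule compare[where Q = 0 and m = 0])
            fix t :: real assume t: "t > 0"
            have "poly (poly P [:-1:]) (1 / of_real t) = c_coeff A n (-1) (A + of_real t)"
              using c_CC[OF S0_shift[OF t], where n=n and u="-1"] by (simp add: P_def)
            also have "\<dots> = 0" using c_minus1[OF n1] by simp
            finally show "poly (poly P [:-1:]) (1 / of_real t) = (1 / of_real t)^0 * poly 0 (of_real t)"
              by simp
          qed (use L1 in simp_all)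
          then show ?thesis using r by (simp add: coeff_ev)
        next
          case False
          define m where "m = i - 1"
          have r: "r = of_nat m" using i False by (simp add: m_def of_nat_diff)
          have mL: "m < L" using i False by (simp add: m_def)
          have "coeff (poly P [:of_nat m:]) L = 0"
          proof (rule compare[where Q = "fps_nth (\<Prod>j<m. KK A (aj m j)) n" and m = m])
            fix t :: real assume t: "t > 0"
            have "poly (poly P [:of_nat m:]) (1 / of_real t) = c_coeff A n (of_nat m) (A + of_real t)"
              using c_CC[OF S0_shift[OF t], where n=n and u="of_nat m"] by (simp add: P_def)
            also have "\<dots> = (1 / of_real t)^m * poly (fps_nth (\<Prod>j<m. KK A (aj m j)) n) (of_real t)"
              using c_nat[OF S0_shift[OF t], where n=n and m=m] by simp
            finally show "poly (poly P [:of_nat m:]) (1 / of_real t) =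
                (1 / of_real t)^m * poly (fps_nth (\<Prod>j<m. KK A (aj m j)) n) (of_real t)" .
          qed (use mL c_nat_deg in simp_all)
          then show ?thesis using r by (simp add: coeff_ev)
        qed
      qed
      have "finite Rts" by (simp add: Rts_def)
      from roots_dvd[OF this van] obtain q where q: "DL P L = (\<Prod>r\<in>Rts. [:-r, 1:]) * q" by blast
      have inj: "inj_on (\<lambda>i. of_nat i - 1 :: complex) {0..L}" by (simp add: inj_on_def)
      have "d l u = (\<Prod>i=0..nat l. u + 1 - of_nat i) * poly q u" for u
      proof -
        have "d l u = poly (DL P L) u" using l by (simp add: d_def L_def)
        also have "\<dots> = (\<Prod>r\<in>Rts. - r + u) * poly q u" by (simp add: q poly_prod)
        also have "(\<Prod>r\<in>Rts. - r + u) = (\<Prod>i=0..L. - (of_nat i - 1) + u)"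
          unfolding Rts_def by (subst prod.reindex[OF inj]) (auto intro!: prod.cong simp: algebra_simps)
        also have "\<dots> = (\<Prod>i=0..nat l. u + 1 - of_nat i)"
          by (simp add: L_def algebra_simps)
        finally show ?thesis .
      qed
      then show ?thesis by blast
    qed
    show ?thesis using i ii iii by blast
  qed
  show ?thesis using part1 part2 by blast
qed

end
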